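(* Let $X$ be a complex Banach space with open unit ball $B$, let $H(B)$ be a uniform algebra with $A_u(B)\subseteq H(B)\subseteq H^\infty(B)$, let $x_0^{**}\in\bar B^{**}$ and $f\in H(B)$. If $\hat f$ is constant on $M^{\mathcal P}_{x_0^{**}}$, say $\hat f(M^{\mathcal P}_{x_0^{**}})=\{\lambda\}$, then every net $(x_\alpha)\subset B$ converging to $x_0^{**}$ in $w(X^{**},P(X))$ satisfies $\lim_\alpha f(x_\alpha)=\lambda$.
   Context: $H^\infty(B)$: bounded holomorphic functions on $B$ with sup norm; $A_u(B)$: uniformly continuous holomorphic functions on $B$ (uniform closure of the continuous polynomials $P(X)$ on $B$); a uniform algebra between them is a closed unital subalgebra of $H^\infty(B)$ containing $A_u(B)$. $M_{H(B)}$ is its spectrum, $\hat f$ the Gelfand transform. $\bar B^{**}$ is the closed unit ball of $X^{**}$; $\tilde P$ (resp. $\tilde g$) is the Aron–Berner extension of $P\in P(X)$ (resp. $g\in A_u(B)$, extended continuously to $\bar B^{**}$). $w(X^{**},P(X))$ is the weakest topology on $X^{**}$ making all $\tilde P$ continuous. The polynomial fiber is $M^{\mathcal P}_{x_0^{**}}=\{\tau\in M_{H(B)}:\tau(g)=\tilde g(x_0^{**})\ \forall g\in A_u(B)\}$. *)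

theory Defs
  imports "HOL-Analysis.Analysis"
begin

(* Isabelle/HOL has no class of complex vector spaces.  A complex Banach space X
   is modelled as a real Banach space 'a together with the operator J = "multiplication by i". *)

definition cscale :: "('a::real_vector \<Rightarrow> 'a) \<Rightarrow> complex \<Rightarrow> 'a \<Rightarrow> 'a" where
  "cscale J c x = Re c *\<^sub>R x + Im c *\<^sub>R J x"

definition complex_structure :: "('a::real_normed_vector \<Rightarrow> 'a) \<Rightarrow> bool" where
  "complex_structure J \<longleftrightarrow> linear J \<and> (\<forall>x. J (J x) = - x)
      \<and> (\<forall>c x. norm (cscale J c x) = cmod c * norm x)"

abbreviation B :: "'a::real_normed_vector set" where
  "B \<equiv> ball 0 1"

definition cdual :: "('a::real_normed_vector \<Rightarrow> 'a) \<Rightarrow> ('a \<Rightarrow> complex) set" where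
  "cdual J = {\<phi>. bounded_linear \<phi> \<and> (\<forall>x. \<phi> (J x) = \<i> * \<phi> x)}"

(* X^** : bounded complex-linear functionals on X^* (extended by 0 off X^* ) *)
definition bidual :: "('a::real_normed_vector \<Rightarrow> 'a) \<Rightarrow> (('a \<Rightarrow> complex) \<Rightarrow> complex) set" where
  "bidual J = {z.
      (\<forall>\<phi>\<in>cdual J. \<forall>\<psi>\<in>cdual J. z (\<lambda>x. \<phi> x + \<psi> x) = z \<phi> + z \<psi>)
    \<and> (\<forall>c. \<forall>\<phi>\<in>cdual J. z (\<lambda>x. c * \<phi> x) = c * z \<phi>)
    \<and> (\<exists>C. \<forall>\<phi>\<in>cdual J. cmod (z \<phi>) \<le> C * onorm \<phi>)
    \<and> (\<forall>\<phi>. \<phi> \<notin> cdual J \<longrightarrow> z \<phi> = 0)}"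

definition bidual_ball :: "('a::real_normed_vector \<Rightarrow> 'a) \<Rightarrow> (('a \<Rightarrow> complex) \<Rightarrow> complex) set" where
  "bidual_ball J = {z \<in> bidual J. \<forall>\<phi>\<in>cdual J. cmod (z \<phi>) \<le> onorm \<phi>}"

definition canon :: "('a::real_normed_vector \<Rightarrow> 'a) \<Rightarrow> 'a \<Rightarrow> (('a \<Rightarrow> complex) \<Rightarrow> complex)" where
  "canon J x = (\<lambda>\<phi>. if \<phi> \<in> cdual J then \<phi> x else 0)"

(* continuous complex m-linear forms; arguments indexed by {..<m} *)
definition cmultilinear :: "('a::real_normed_vector \<Rightarrow> 'a) \<Rightarrow> nat \<Rightarrow> ((nat \<Rightarrow> 'a) \<Rightarrow> complex) \<Rightarrow> bool" where
  "cmultilinear J m A \<longleftrightarrow>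
      (\<forall>xs ys. (\<forall>i<m. xs i = ys i) \<longrightarrow> A xs = A ys)
    \<and> (\<forall>k<m. \<forall>xs. (\<lambda>y. A (xs(k := y))) \<in> cdual J)
    \<and> (\<exists>C. \<forall>xs. cmod (A xs) \<le> C * (\<Prod>i<m. norm (xs i)))"

definition symmetric_form :: "nat \<Rightarrow> ((nat \<Rightarrow> 'a) \<Rightarrow> complex) \<Rightarrow> bool" where
  "symmetric_form m A \<longleftrightarrow> (\<forall>\<sigma> xs. \<sigma> permutes {..<m} \<longrightarrow> A (xs \<circ> \<sigma>) = A xs)"

definition poly_rep :: "('a::real_normed_vector \<Rightarrow> 'a) \<Rightarrow> ('a \<Rightarrow> complex) \<Rightarrow> nat
      \<Rightarrow> (nat \<Rightarrow> (nat \<Rightarrow> 'a) \<Rightarrow> complex) \<Rightarrow> bool" where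
  "poly_rep J P N A \<longleftrightarrow> (\<forall>m\<le>N. cmultilinear J m (A m) \<and> symmetric_form m (A m))
      \<and> (\<forall>x. P x = (\<Sum>m\<le>N. A m (\<lambda>_. x)))"

definition cpoly :: "('a::real_normed_vector \<Rightarrow> 'a) \<Rightarrow> ('a \<Rightarrow> complex) \<Rightarrow> bool" where
  "cpoly J P \<longleftrightarrow> (\<exists>N A. poly_rep J P N A)"

(* ABext m A j xs zs: the last j variables (positions m-j..m-1) are extended to X^**,
   taking the values zs i; the first m-j variables are xs i \<in> X.  The variable at
   position m-1 is extended first (innermost iterated weak-star limit). *)
fun ABext :: "nat \<Rightarrow> ((nat \<Rightarrow> 'a) \<Rightarrow> complex) \<Rightarrow> nat \<Rightarrow> (nat \<Rightarrow> 'a)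
      \<Rightarrow> (nat \<Rightarrow> (('a \<Rightarrow> complex) \<Rightarrow> complex)) \<Rightarrow> complex" where
  "ABext m A 0 xs zs = A xs"
| "ABext m A (Suc j) xs zs = zs (m - Suc j) (\<lambda>y. ABext m A j (xs(m - Suc j := y)) zs)"

(* Aron--Berner extension of a polynomial P \<in> P(X) (independent of the representation) *)
definition ABpoly :: "('a::real_normed_vector \<Rightarrow> 'a) \<Rightarrow> ('a \<Rightarrow> complex)
      \<Rightarrow> (('a \<Rightarrow> complex) \<Rightarrow> complex) \<Rightarrow> complex" where
  "ABpoly J P z = (SOME v. \<exists>N A. poly_rep J P N A
        \<and> v = (\<Sum>m\<le>N. ABext m (A m) m (\<lambda>_. 0) (\<lambda>_. z)))"

definition Au :: "('a::real_normed_vector \<Rightarrow> 'a) \<Rightarrow> ('a \<Rightarrow> complex) set" where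
  "Au J = {g. \<exists>P. (\<forall>n. cpoly J (P n)) \<and> uniform_limit B P g sequentially}"

definition Au_ext :: "('a::real_normed_vector \<Rightarrow> 'a) \<Rightarrow> ('a \<Rightarrow> complex)
      \<Rightarrow> (('a \<Rightarrow> complex) \<Rightarrow> complex) \<Rightarrow> complex" where
  "Au_ext J g z = lim (\<lambda>n. ABpoly J
      ((SOME P. (\<forall>n. cpoly J (P n)) \<and> uniform_limit B P g sequentially) n) z)"

definition holo_on_B :: "('a::real_normed_vector \<Rightarrow> 'a) \<Rightarrow> ('a \<Rightarrow> complex) \<Rightarrow> bool" where
  "holo_on_B J f \<longleftrightarrow> (\<forall>x\<in>B. \<exists>D. (f has_derivative D) (at x) \<and> (\<forall>h. D (J h) = \<i> * D h))"

definition Hinf :: "('a::real_normed_vector \<Rightarrow> 'a) \<Rightarrow> ('a \<Rightarrow> complex) set" where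
  "Hinf J = {f. holo_on_B J f \<and> bounded (f ` B)}"

definition uniform_algebra :: "('a::real_normed_vector \<Rightarrow> 'a) \<Rightarrow> ('a \<Rightarrow> complex) set \<Rightarrow> bool" where
  "uniform_algebra J H \<longleftrightarrow> Au J \<subseteq> H \<and> H \<subseteq> Hinf J
     \<and> (\<forall>f\<in>H. \<forall>g\<in>H. (\<lambda>x. f x + g x) \<in> H \<and> (\<lambda>x. f x * g x) \<in> H)
     \<and> (\<forall>c. \<forall>f\<in>H. (\<lambda>x. c * f x) \<in> H)
     \<and> (\<lambda>x. 1) \<in> H
     \<and> (\<forall>F f. (\<forall>n. F n \<in> H) \<and> uniform_limit B F f sequentially \<longrightarrow> f \<in> H)"

(* spectrum M_{H(B)}: nonzero multiplicative linear functionals on H(B); elements of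
   H(B) are functions on B, so \<tau> must only depend on the restriction to B *)
definition spectrum_alg :: "('a::real_normed_vector \<Rightarrow> complex) set
      \<Rightarrow> (('a \<Rightarrow> complex) \<Rightarrow> complex) set" where
  "spectrum_alg H = {\<tau>.
      (\<forall>f\<in>H. \<forall>g\<in>H. \<tau> (\<lambda>x. f x + g x) = \<tau> f + \<tau> g)
    \<and> (\<forall>c. \<forall>f\<in>H. \<tau> (\<lambda>x. c * f x) = c * \<tau> f)
    \<and> (\<forall>f\<in>H. \<forall>g\<in>H. \<tau> (\<lambda>x. f x * g x) = \<tau> f * \<tau> g)
    \<and> \<tau> (\<lambda>x. 1) = 1
    \<and> (\<forall>f\<in>H. \<forall>g\<in>H. (\<forall>x\<in>B. f x = g x) \<longrightarrow> \<tau> f = \<tau> g)}"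

definition poly_fiber :: "('a::real_normed_vector \<Rightarrow> 'a) \<Rightarrow> ('a \<Rightarrow> complex) set
      \<Rightarrow> (('a \<Rightarrow> complex) \<Rightarrow> complex) \<Rightarrow> (('a \<Rightarrow> complex) \<Rightarrow> complex) set" where
  "poly_fiber J H z0 = {\<tau> \<in> spectrum_alg H. \<forall>g\<in>Au J. \<tau> g = Au_ext J g z0}"

definition wP_topology :: "('a::real_normed_vector \<Rightarrow> 'a) \<Rightarrow> (('a \<Rightarrow> complex) \<Rightarrow> complex) topology" where
  "wP_topology J = topology_generated_by
      {{z \<in> bidual J. ABpoly J P z \<in> U} | P U. cpoly J P \<and> open U}"

(* nets: a directed preorder on the index type and its section filter *)
definition directed :: "('i \<Rightarrow> 'i \<Rightarrow> bool) \<Rightarrow> bool" where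
  "directed le \<longleftrightarrow> (\<forall>a. le a a) \<and> (\<forall>a b c. le a b \<longrightarrow> le b c \<longrightarrow> le a c)
      \<and> (\<forall>a b. \<exists>c. le a c \<and> le b c)"

definition net_filter :: "('i \<Rightarrow> 'i \<Rightarrow> bool) \<Rightarrow> 'i filter" where
  "net_filter le = (INF a. principal {b. le a b})"

end

theory Submission imports Defs begin

lemma ABext_canon:
  assumes ml: "cmultilinear J m A"
  shows "j \<le> m \<Longrightarrow> ABext m A j xs (\<lambda>_. canon J y) = A (\<lambda>i. if m - j \<le> i \<and> i < m then y else xs i)"
proof (induction j arbitrary: xs)
  case 0
  have "(\<lambda>i. if m \<le> i \<and> i < m then y else xs i) = xs" by (rule ext) (meson leD)
  then show ?case by simp
next
  case (Suc j)
  define k where "k = m - Suc j"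
  have km: "k < m" using Suc.prems unfolding k_def by simp
  have eq: "\<And>z. (\<lambda>i. if m - j \<le> i \<and> i < m then y else (xs(k := z)) i)
        = (\<lambda>i. if m - j \<le> i \<and> i < m then y else xs i)(k := z)"
    using Suc.prems unfolding k_def by (auto simp: fun_eq_iff)
  have IH: "\<And>z. ABext m A j (xs(k := z)) (\<lambda>_. canon J y) = A ((\<lambda>i. if m - j \<le> i \<and> i < m then y else xs i)(k := z))"
  proof -
    fix z
    show "ABext m A j (xs(k := z)) (\<lambda>_. canon J y) = A ((\<lambda>i. if m - j \<le> i \<and> i < m then y else xs i)(k := z))"
      using Suc.IH[of "xs(k := z)"] Suc.prems eq[of z] by (metis Suc_leD)
  qed
  have cd: "(\<lambda>z. A ((\<lambda>i. if m - j \<le> i \<and> i < m then y else xs i)(k := z))) \<in> cdual J"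
    using ml km unfolding cmultilinear_def by blast
  have eq2: "(\<lambda>i. if m - j \<le> i \<and> i < m then y else xs i)(k := y) = (\<lambda>i. if m - Suc j \<le> i \<and> i < m then y else xs i)"
    using Suc.prems unfolding k_def by (auto simp: fun_eq_iff)
  have fn: "(\<lambda>z. ABext m A j (xs(k := z)) (\<lambda>_. canon J y)) = (\<lambda>z. A ((\<lambda>i. if m - j \<le> i \<and> i < m then y else xs i)(k := z)))"
    by (rule ext) (rule IH)
  have "ABext m A (Suc j) xs (\<lambda>_. canon J y) = canon J y (\<lambda>z. ABext m A j (xs(k := z)) (\<lambda>_. canon J y))"
    by (simp add: k_def)
  also have "\<dots> = A ((\<lambda>i. if m - j \<le> i \<and> i < m then y else xs i)(k := y))"
    unfolding fn using cd by (simp add: canon_def)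
  finally show ?case by (simp only: eq2)
qed

lemma ABpoly_canon:
  assumes "cpoly J P"
  shows "ABpoly J P (canon J y) = P y"
proof -
  have key: "(\<Sum>m\<le>N. ABext m (A m) m (\<lambda>_. 0) (\<lambda>_. canon J y)) = P y" if r: "poly_rep J P N A" for N A
  proof -
    have "ABext m (A m) m (\<lambda>_. 0) (\<lambda>_. canon J y) = A m (\<lambda>_. y)" if "m \<le> N" for m
    proof -
      have ml: "cmultilinear J m (A m)" using r that unfolding poly_rep_def by blast
      have "ABext m (A m) m (\<lambda>_. 0) (\<lambda>_. canon J y) = A m (\<lambda>i. if m - m \<le> i \<and> i < m then y else 0)"
        using ABext_canon[OF ml] by simp
      also have "\<dots> = A m (\<lambda>_. y)"
      proof -
        have c1: "\<forall>xs ys. (\<forall>i<m. xs i = ys i) \<longrightarrow> A m xs = A m ys"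
          using ml unfolding cmultilinear_def by blast
        show ?thesis by (rule c1[rule_format]) simp
      qed
      finally show ?thesis .
    qed
    then have "(\<Sum>m\<le>N. ABext m (A m) m (\<lambda>_. 0) (\<lambda>_. canon J y)) = (\<Sum>m\<le>N. A m (\<lambda>_. y))"
      by (intro sum.cong) auto
    moreover have "P y = (\<Sum>m\<le>N. A m (\<lambda>_. y))" using r unfolding poly_rep_def by blast
    ultimately show ?thesis by simp
  qed
  obtain N A where r: "poly_rep J P N A" using assms unfolding cpoly_def by blast
  have ex: "\<exists>v. \<exists>N A. poly_rep J P N A \<and> v = (\<Sum>m\<le>N. ABext m (A m) m (\<lambda>_. 0) (\<lambda>_. canon J y))"
  proof (intro exI conjI)
    show "poly_rep J P N A" by (rule r)
  qed (rule refl)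
  from someI_ex[OF ex] obtain N' A' where r': "poly_rep J P N' A'"
    and v: "(SOME v. \<exists>N A. poly_rep J P N A \<and> v = (\<Sum>m\<le>N. ABext m (A m) m (\<lambda>_. 0) (\<lambda>_. canon J y)))
        = (\<Sum>m\<le>N'. ABext m (A' m) m (\<lambda>_. 0) (\<lambda>_. canon J y))"
    by blast
  show ?thesis unfolding ABpoly_def v using key[OF r'] .
qed

lemma net_eventually:
  assumes "directed le"
  shows "eventually P (net_filter le) \<longleftrightarrow> (\<exists>a. \<forall>b. le a b \<longrightarrow> P b)"
proof -
  have "eventually P (net_filter le) \<longleftrightarrow> (\<exists>a\<in>UNIV. eventually P (principal {b. le a b}))"
    unfolding net_filter_def
  proof (rule eventually_INF_base)
    fix a b :: 'a
    obtain c where "le a c" "le b c" using assms unfolding directed_def by blast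
    then show "\<exists>x\<in>UNIV. principal {b. le x b} \<le> inf (principal {b. le a b}) (principal {ba. le b ba})"
      using assms unfolding directed_def by (intro bexI[of _ c]) auto
  qed auto
  then show ?thesis by (simp add: eventually_principal)
qed

lemma net_nonbot:
  assumes "directed le"
  shows "net_filter le \<noteq> bot"
  using net_eventually[OF assms, of "\<lambda>_. False"] assms unfolding directed_def
  by (metis eventually_bot)


lemma poly_conv:
  assumes "cpoly J P" "z0 \<in> bidual J"
    and lim: "limitin (wP_topology J) (\<lambda>a. canon J (x a)) z0 F"
  shows "((\<lambda>a. P (x a)) \<longlongrightarrow> ABpoly J P z0) F"
proof (rule topological_tendstoI)
  fix U assume U: "open U" "ABpoly J P z0 \<in> U"
  have "openin (wP_topology J) {z \<in> bidual J. ABpoly J P z \<in> U}"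
    unfolding wP_topology_def openin_topology_generated_by_iff
    apply (rule generate_topology_on.Basis)
    apply (rule CollectI)
    apply (rule exI[of _ P], rule exI[of _ U])
    using assms U by simp
  moreover have "z0 \<in> {z \<in> bidual J. ABpoly J P z \<in> U}" using assms U by simp
  ultimately have "eventually (\<lambda>a. canon J (x a) \<in> {z \<in> bidual J. ABpoly J P z \<in> U}) F"
    using lim unfolding limitin_def by blast
  then show "eventually (\<lambda>a. P (x a) \<in> U) F"
    by eventually_elim (use ABpoly_canon[OF assms(1)] in simp)
qed

lemma Au_conv:
  fixes g :: "'a::real_normed_vector \<Rightarrow> complex" and x :: "'i \<Rightarrow> 'a"
  assumes g: "g \<in> Au J" and F: "F \<noteq> bot" and xB: "\<forall>a. x a \<in> B"
    and pc: "\<And>P. cpoly J P \<Longrightarrow> ((\<lambda>a. P (x a)) \<longlongrightarrow> ABpoly J P z0) F"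
  shows "((\<lambda>a. g (x a)) \<longlongrightarrow> Au_ext J g z0) F"
proof -
  define P where "P = (SOME P. (\<forall>n. cpoly J (P n)) \<and> uniform_limit B P g sequentially)"
  have "\<exists>P. (\<forall>n. cpoly J (P n)) \<and> uniform_limit B P g sequentially" using g unfolding Au_def by blast
  from someI_ex[OF this] have Pc: "\<And>n. cpoly J (P n)" and ul: "uniform_limit B P g sequentially"
    unfolding P_def by blast+
  define c where "c n = ABpoly J (P n) z0" for n
  have cl: "((\<lambda>a. P n (x a)) \<longlongrightarrow> c n) F" for n using pc[OF Pc] unfolding c_def .
  have ae: "Au_ext J g z0 = lim c" unfolding Au_ext_def c_def P_def by simp
  have bnd: "dist (c n) (c m) \<le> e" if "\<forall>y\<in>(B::'a set). dist (P n (y::'a)) (P m y) \<le> e" for n m e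
  proof -
    have "((\<lambda>a. dist (P n (x a)) (P m (x a))) \<longlongrightarrow> dist (c n) (c m)) F"
      using cl[of n] cl[of m] by (intro tendsto_dist)
    moreover have "eventually (\<lambda>a. dist (P n (x a)) (P m (x a)) \<le> e) F"
      using that xB by simp
    ultimately show ?thesis using F by (rule tendsto_upperbound)
  qed
  have unif: "\<forall>e>0. \<exists>N. \<forall>n\<ge>N. \<forall>y\<in>(B::'a set). dist (P n y) (g y) < e"
    using ul unfolding uniform_limit_iff eventually_sequentially by blast
  have "Cauchy c"
  proof (rule metric_CauchyI)
    fix e :: real assume e: "e > 0"
    have e3: "e/3 > 0" using e by simp
    from unif[rule_format, OF e3] obtain N where N: "\<forall>n\<ge>N. \<forall>y\<in>(B::'a set). dist (P n y) (g y) < e/3" by blast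
    show "\<exists>M. \<forall>m\<ge>M. \<forall>n\<ge>M. dist (c m) (c n) < e"
    proof (intro exI[of _ N] allI impI)
      fix m n assume "m \<ge> N" "n \<ge> N"
      have "\<forall>y\<in>(B::'a set). dist (P m y) (P n y) \<le> 2*e/3"
      proof
        fix y :: 'a assume y: "y \<in> B"
        have "dist (P m y) (P n y) \<le> dist (P m y) (g y) + dist (P n y) (g y)" by (rule dist_triangle2)
        moreover have "dist (P m y) (g y) < e/3" "dist (P n y) (g y) < e/3" using N y \<open>m \<ge> N\<close> \<open>n \<ge> N\<close> by auto
        ultimately show "dist (P m y) (P n y) \<le> 2*e/3" by linarith
      qed
      then have "dist (c m) (c n) \<le> 2*e/3" by (rule bnd)
      then show "dist (c m) (c n) < e" using e by simp
    qed
  qed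
  then have cc: "c \<longlonglongrightarrow> lim c" by (simp add: Cauchy_convergent_iff convergent_LIMSEQ_iff)
  show ?thesis unfolding ae
  proof (rule tendstoI)
    fix e :: real assume e: "e > 0"
    have e3: "e/3 > 0" using e by simp
    from unif[rule_format, OF e3] obtain N1 where N1: "\<forall>n\<ge>N1. \<forall>y\<in>(B::'a set). dist (P n y) (g y) < e/3" by blast
    obtain N2 where N2: "\<forall>n\<ge>N2. dist (c n) (lim c) < e/3"
      using cc e3 unfolding lim_sequentially by blast
    define n where "n = max N1 N2"
    have "eventually (\<lambda>a. dist (P n (x a)) (c n) < e/3) F" by (rule tendstoD[OF cl[of n] e3])
    then show "eventually (\<lambda>a. dist (g (x a)) (lim c) < e) F"
    proof eventually_elim
      case (elim a)
      have "dist (P n (x a)) (g (x a)) < e/3" using N1 xB unfolding n_def by simp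
      moreover have "dist (c n) (lim c) < e/3" using N2 unfolding n_def by simp
      moreover have "dist (g (x a)) (lim c) \<le> dist (P n (x a)) (g (x a)) + dist (P n (x a)) (lim c)"
        by (rule dist_triangle3)
      moreover have "dist (P n (x a)) (lim c) \<le> dist (P n (x a)) (c n) + dist (c n) (lim c)"
        by (rule dist_triangle)
      ultimately show ?case using elim by linarith
    qed
  qed
qed

lemma cluster_closed:
  assumes "inf (nhds t) F \<noteq> bot" "closed C" "eventually (\<lambda>p. p \<in> C) F"
  shows "t \<in> C"
proof (rule ccontr)
  assume "t \<notin> C"
  then have "eventually (\<lambda>p. p \<in> - C) (nhds t)" using assms(2)
    unfolding eventually_nhds by (intro exI[of _ "-C"]) auto
  then have "eventually (\<lambda>p. False) (inf (nhds t) F)"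
    using assms(3) unfolding eventually_inf by blast
  then show False using assms(1) by (simp add: eventually_False)
qed


lemma coord_cont[continuous_intros]: "continuous_on S (\<lambda>p. (p::'b \<Rightarrow> 'c::topological_space) i)"
  by (rule continuous_on_subset[OF continuous_on_product_coordinates]) simp

theorem mainTheorem2:
  fixes J :: "'a::banach \<Rightarrow> 'a"
    and H :: "('a \<Rightarrow> complex) set"
    and z0 :: "('a \<Rightarrow> complex) \<Rightarrow> complex"
    and f :: "'a \<Rightarrow> complex"
    and lam :: complex
    and le :: "'i \<Rightarrow> 'i \<Rightarrow> bool"
    and x :: "'i \<Rightarrow> 'a"
  assumes "complex_structure J"
    and "uniform_algebra J H"
    and "z0 \<in> bidual_ball J"
    and "f \<in> H"
    and "(\<lambda>\<tau>. \<tau> f) ` poly_fiber J H z0 = {lam}"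
    and "directed le"
    and "\<forall>a. x a \<in> B"
    and "limitin (wP_topology J) (\<lambda>a. canon J (x a)) z0 (net_filter le)"
  shows "((\<lambda>a. f (x a)) \<longlongrightarrow> lam) (net_filter le)"
proof (rule ccontr)
  assume nt: "\<not> ?thesis"
  define F where "F = net_filter le"
  have Fnb: "F \<noteq> bot" unfolding F_def using net_nonbot[OF assms(6)] .
  have ua_all: "Au J \<subseteq> H \<and> H \<subseteq> Hinf J
     \<and> (\<forall>f\<in>H. \<forall>g\<in>H. (\<lambda>x. f x + g x) \<in> H \<and> (\<lambda>x. f x * g x) \<in> H)
     \<and> (\<forall>c. \<forall>f\<in>H. (\<lambda>x. c * f x) \<in> H)
     \<and> (\<lambda>x. 1) \<in> H"
    using assms(2) unfolding uniform_algebra_def by (elim conjE) (intro conjI)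
  note ua = ua_all[THEN conjunct1] ua_all[THEN conjunct2, THEN conjunct1]
     ua_all[THEN conjunct2, THEN conjunct2, THEN conjunct1]
     ua_all[THEN conjunct2, THEN conjunct2, THEN conjunct2, THEN conjunct1]
     ua_all[THEN conjunct2, THEN conjunct2, THEN conjunct2, THEN conjunct2]
  have z0b: "z0 \<in> bidual J" using assms(3) unfolding bidual_ball_def by blast
  have xB: "\<forall>a. x a \<in> B" using assms(7) .
  have "\<not> (\<forall>e>0. eventually (\<lambda>a. dist (f (x a)) lam < e) F)"
    using nt unfolding F_def tendsto_iff .
  then obtain e where e: "e > 0" and ne: "\<not> eventually (\<lambda>a. dist (f (x a)) lam < e) F"
    by auto
  define S where "S = {a. e \<le> dist (f (x a)) lam}"
  define F' where "F' = inf F (principal S)"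
  have F'nb: "F' \<noteq> bot"
  proof
    assume "F' = bot"
    then have "eventually (\<lambda>a. False) F'" by simp
    then have "eventually (\<lambda>a. a \<in> S \<longrightarrow> False) F"
      unfolding F'_def eventually_inf_principal .
    then have "eventually (\<lambda>a. dist (f (x a)) lam < e) F"
      by eventually_elim (auto simp: S_def)
    with ne show False by simp
  qed
  have F'le: "F' \<le> F" unfolding F'_def by (rule inf_le1)
  define bd where "bd h = (if h \<in> H then (SOME b. \<forall>y\<in>B. norm (h y) \<le> b) else 0)" for h :: "'a \<Rightarrow> complex"
  have bdh: "\<forall>y\<in>B. norm (h y) \<le> bd h" if "h \<in> H" for h
  proof -
    have "bounded (h ` B)" using that ua(2) unfolding Hinf_def by blast
    then have "\<exists>b. \<forall>y\<in>B. norm (h y) \<le> b" unfolding bounded_iff by blast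
    from someI_ex[OF this] show ?thesis using that unfolding bd_def by simp
  qed
  have bd0: "bd h = 0" if "h \<notin> H" for h using that by (simp add: bd_def)
  define \<Phi> where "\<Phi> a = (\<lambda>h. if h \<in> H then h (x a) else 0)" for a
  define K where "K = Pi UNIV (\<lambda>h. cball (0::complex) (bd h))"
  have "compact K"
  proof -
    have "compactin (product_topology (\<lambda>i. euclidean) UNIV) (PiE UNIV (\<lambda>h. cball (0::complex) (bd h)))"
      by (simp add: compactin_PiE)
    then show ?thesis unfolding K_def by (simp add: euclidean_product_topology PiE_UNIV_domain)
  qed
  define G where "G = filtermap \<Phi> F'"
  have Gnb: "G \<noteq> bot" unfolding G_def using F'nb by (simp add: filtermap_bot_iff)
  have PhiK: "\<Phi> a \<in> K" for a
    unfolding K_def \<Phi>_def using bdh xB bd0 by (auto simp: dist_norm)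
  have "eventually (\<lambda>p. p \<in> K) G" unfolding G_def eventually_filtermap using PhiK by simp
  then obtain \<tau> where cl: "inf (nhds \<tau>) G \<noteq> bot"
    using \<open>compact K\<close> Gnb unfolding compact_filter by blast
  have alw: "\<tau> \<in> C" if "closed C" "\<And>a. \<Phi> a \<in> C" for C
    using cluster_closed[OF cl that(1)] that(2) unfolding G_def eventually_filtermap by simp
  have alw2: "\<tau> \<in> {p. l p = r p}" if "continuous_on UNIV l" "continuous_on UNIV r" "\<And>a. l (\<Phi> a) = r (\<Phi> a)"
    for l r :: "(('a \<Rightarrow> complex) \<Rightarrow> complex) \<Rightarrow> complex"
    by (rule alw) (use that in \<open>auto intro: closed_Collect_eq\<close>)
  have sp: "\<tau> \<in> spectrum_alg H"
    unfolding spectrum_alg_def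
  proof (intro CollectI conjI ballI allI impI)
    fix g h assume gh: "g \<in> H" "h \<in> H"
    have "\<tau> \<in> {p. p (\<lambda>x. g x + h x) = p g + p h}"
      by (rule alw2) (use gh ua(3) in \<open>auto simp: \<Phi>_def intro!: continuous_intros\<close>)
    then show "\<tau> (\<lambda>x. g x + h x) = \<tau> g + \<tau> h" by simp
    have "\<tau> \<in> {p. p (\<lambda>x. g x * h x) = p g * p h}"
      by (rule alw2) (use gh ua(3) in \<open>auto simp: \<Phi>_def intro!: continuous_intros\<close>)
    then show "\<tau> (\<lambda>x. g x * h x) = \<tau> g * \<tau> h" by simp
  next
    fix c g assume g: "g \<in> H"
    have "\<tau> \<in> {p. p (\<lambda>x. c * g x) = c * p g}"
      by (rule alw2) (use g ua(4) in \<open>auto simp: \<Phi>_def intro!: continuous_intros\<close>)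
    then show "\<tau> (\<lambda>x. c * g x) = c * \<tau> g" by simp
  next
    have "\<tau> \<in> {p. p (\<lambda>x. 1) = 1}"
      by (rule alw2) (use ua(5) in \<open>auto simp: \<Phi>_def intro!: continuous_intros\<close>)
    then show "\<tau> (\<lambda>x. 1) = 1" by simp
  next
    fix g h assume gh: "g \<in> H" "h \<in> H" and eq: "\<forall>x\<in>B. g x = h x"
    have "\<tau> \<in> {p. p g = p h}"
      by (rule alw2) (use gh eq xB in \<open>auto simp: \<Phi>_def intro!: continuous_intros\<close>)
    then show "\<tau> g = \<tau> h" by simp
  qed
  have fib: "\<tau> \<in> poly_fiber J H z0"
    unfolding poly_fiber_def
  proof (intro CollectI conjI sp ballI)
    fix g assume g: "g \<in> Au J"
    have gH: "g \<in> H" using g ua(1) by blast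
    have pc: "\<And>P. cpoly J P \<Longrightarrow> ((\<lambda>a. P (x a)) \<longlongrightarrow> ABpoly J P z0) F"
      using poly_conv z0b assms(8) unfolding F_def by blast
    have "((\<lambda>a. g (x a)) \<longlongrightarrow> Au_ext J g z0) F"
      using Au_conv[OF g Fnb xB pc] .
    then have t: "((\<lambda>a. g (x a)) \<longlongrightarrow> Au_ext J g z0) F'" using F'le by (rule tendsto_mono[rotated])
    have "dist (\<tau> g) (Au_ext J g z0) \<le> d" if d: "d > 0" for d
    proof -
      have ev: "eventually (\<lambda>a. dist (g (x a)) (Au_ext J g z0) < d) F'" using t d by (rule tendstoD)
      have "closed {p. dist (p g) (Au_ext J g z0) \<le> d}"
        by (intro closed_Collect_le continuous_intros)
      moreover have "eventually (\<lambda>p. p \<in> {p. dist (p g) (Au_ext J g z0) \<le> d}) G"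
        unfolding G_def eventually_filtermap using ev
        by eventually_elim (simp add: \<Phi>_def gH)
      ultimately show ?thesis using cluster_closed[OF cl] by blast
    qed
    then show "\<tau> g = Au_ext J g z0"
      by (metis dist_le_zero_iff dense not_le zero_less_dist_iff)
  qed
  have "closed {p. e \<le> dist (p f) lam}"
    by (intro closed_Collect_le continuous_intros)
  moreover have "eventually (\<lambda>p. p \<in> {p. e \<le> dist (p f) lam}) G"
    unfolding G_def eventually_filtermap F'_def eventually_inf_principal
    by (simp add: \<Phi>_def assms(4) S_def)
  ultimately have "e \<le> dist (\<tau> f) lam" using cluster_closed[OF cl] by blast
  moreover have "\<tau> f = lam" using fib assms(5) by blast
  ultimately show False using e by simp
qed

end
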